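(* Let $Y$ be a set, $\Lambda$ an index set, and for $\ell\in\Lambda$ let $\rho_\ell:Y\to Y_\ell$ be surjective onto a finite set, with a probability density $\nu_\ell>0$ on $Y_\ell$ and an orthonormal basis $\mathcal{B}_\ell$ of $L^2(Y_\ell,\nu_\ell)$ (inner product $\langle f,g\rangle=\sum_y\nu_\ell(y)f(y)\overline{g(y)}$) containing the constant function $1$, $\mathcal{B}_\ell^*=\mathcal{B}_\ell\setminus\{1\}$. Let $(X,\mu)$ be a measure space with $\mu(X)<\infty$ and $F:X\to Y$ with all sets $\{\rho_\ell(F_x)=y\}$ measurable. Let $\mathcal{L}^*\subset\Lambda$ be finite and let $\Delta$ be the smallest non-negative real number such that $\sum_{\ell\in\mathcal{L}^*}\sum_{\varphi\in\mathcal{B}_\ell^*}|\int_X\alpha(x)\varphi(\rho_\ell(F_x))d\mu(x)|^2\leq\Delta\int_X|\alpha|^2d\mu$ for all square-integrable $\alpha:X\to\mathbf{C}$. Then for any subsets $\Omega_\ell\subset Y_\ell$ ($\ell\in\mathcal{L}^*$), $$\int_X\big(P(x,\mathcal{L})-P(\mathcal{L})\big)^2\,d\mu(x)\leq\Delta\,Q(\mathcal{L}),$$ where $P(x,\mathcal{L})=|\{\ell\in\mathcal{L}^*\mid \rho_\ell(F_x)\in\Omega_\ell\}|$, $P(\mathcal{L})=\sum_{\ell\in\mathcal{L}^*}\nu_\ell(\Omega_\ell)$ and $Q(\mathcal{L})=\sum_{\ell\in\mathcal{L}^*}\nu_\ell(\Omega_\ell)(1-\nu_\ell(\Omega_\ell))$,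 with $\nu_\ell(\Omega_\ell)=\sum_{y\in\Omega_\ell}\nu_\ell(y)$. *)

theory Defs
  imports "HOL-Analysis.Analysis" "HOL-Probability.Probability"
begin

definition l2inner :: "'z set \<Rightarrow> ('z \<Rightarrow> real) \<Rightarrow> ('z \<Rightarrow> complex) \<Rightarrow> ('z \<Rightarrow> complex) \<Rightarrow> complex" where
  "l2inner Yset nu f g = (\<Sum>y\<in>Yset. complex_of_real (nu y) * f y * cnj (g y))"

text \<open>B is an orthonormal basis of L^2(Yset, nu) (functions compared on Yset through
  the inner product; distinct elements of B are orthogonal, so they differ on Yset).\<close>
definition is_onb :: "'z set \<Rightarrow> ('z \<Rightarrow> real) \<Rightarrow> ('z \<Rightarrow> complex) set \<Rightarrow> bool" where
  "is_onb Yset nu B \<longleftrightarrow> finite B \<and>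
     (\<forall>\<phi>\<in>B. \<forall>\<psi>\<in>B. l2inner Yset nu \<phi> \<psi> = (if \<phi> = \<psi> then 1 else 0)) \<and>
     (\<forall>f :: 'z \<Rightarrow> complex. \<exists>c. \<forall>y\<in>Yset. f y = (\<Sum>\<phi>\<in>B. c \<phi> * \<phi> y))"

definition nu_set :: "('z \<Rightarrow> real) \<Rightarrow> 'z set \<Rightarrow> real" where
  "nu_set nu \<Omega> = (\<Sum>y\<in>\<Omega>. nu y)"

definition square_integrable :: "'x measure \<Rightarrow> ('x \<Rightarrow> complex) \<Rightarrow> bool" where
  "square_integrable M \<alpha> \<longleftrightarrow> \<alpha> \<in> borel_measurable M \<and> integrable M (\<lambda>x. (cmod (\<alpha> x))\<^sup>2)"

definition sieve_ineq ::
  "'x measure \<Rightarrow> ('x \<Rightarrow> 'y) \<Rightarrow> ('l \<Rightarrow> 'y \<Rightarrow> 'z) \<Rightarrow> ('l \<Rightarrow> ('z \<Rightarrow> complex) set) \<Rightarrow> 'l set \<Rightarrow> real \<Rightarrow> bool" where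
  "sieve_ineq M F \<rho> B Ls D \<longleftrightarrow>
     (\<forall>\<alpha>. square_integrable M \<alpha> \<longrightarrow>
        (\<Sum>l\<in>Ls. \<Sum>\<phi>\<in>B l - {(\<lambda>_. 1)}.
            (cmod (integral\<^sup>L M (\<lambda>x. \<alpha> x * \<phi> (\<rho> l (F x)))))\<^sup>2)
        \<le> D * integral\<^sup>L M (\<lambda>x. (cmod (\<alpha> x))\<^sup>2))"

end

theory Submission imports Defs begin

lemma dual:
  fixes M :: "'x measure" and K :: "'k set" and \<psi> :: "'k \<Rightarrow> 'x \<Rightarrow> complex" and \<beta> :: "'k \<Rightarrow> complex"
  assumes fm: "finite_measure M" and fK: "finite K"
    and mpsi: "\<And>k. k \<in> K \<Longrightarrow> \<psi> k \<in> borel_measurable M"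
    and bpsi: "\<And>k. k \<in> K \<Longrightarrow> \<exists>C. \<forall>x\<in>space M. cmod (\<psi> k x) \<le> C"
    and H: "\<And>\<alpha>. square_integrable M \<alpha> \<Longrightarrow>
       (\<Sum>k\<in>K. (cmod (integral\<^sup>L M (\<lambda>x. \<alpha> x * \<psi> k x)))\<^sup>2) \<le> \<Delta> * integral\<^sup>L M (\<lambda>x. (cmod (\<alpha> x))\<^sup>2)"
    and D0: "\<Delta> \<ge> 0"
  shows "integral\<^sup>L M (\<lambda>x. (cmod (\<Sum>k\<in>K. \<beta> k * \<psi> k x))\<^sup>2) \<le> \<Delta> * (\<Sum>k\<in>K. (cmod (\<beta> k))\<^sup>2)"
proof -
  interpret finite_measure M by fact
  define S where "S x = (\<Sum>k\<in>K. \<beta> k * \<psi> k x)" for x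
  obtain C where C: "\<And>k x. k \<in> K \<Longrightarrow> x \<in> space M \<Longrightarrow> cmod (\<psi> k x) \<le> C k"
    using bpsi by metis
  have mS: "S \<in> borel_measurable M" unfolding S_def using mpsi by measurable
  have bS: "cmod (S x) \<le> (\<Sum>k\<in>K. cmod (\<beta> k) * C k)" if "x \<in> space M" for x
  proof -
    have "cmod (S x) \<le> (\<Sum>k\<in>K. cmod (\<beta> k * \<psi> k x))" unfolding S_def by (rule norm_sum)
    also have "\<dots> \<le> (\<Sum>k\<in>K. cmod (\<beta> k) * C k)"
      by (intro sum_mono) (auto simp: norm_mult intro!: mult_left_mono C that)
    finally show ?thesis .
  qed
  define B0 where "B0 = (\<Sum>k\<in>K. cmod (\<beta> k) * C k)"
  have B0: "x \<in> space M \<Longrightarrow> cmod (S x) \<le> B0" for x using bS B0_def by simp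
  define \<alpha> where "\<alpha> x = cnj (S x)" for x
  have m\<alpha>: "\<alpha> \<in> borel_measurable M" unfolding \<alpha>_def using mS
    by (subst borel_measurable_complex_iff) (auto simp: borel_measurable_complex_iff)
  have isq: "integrable M (\<lambda>x. (cmod (S x))\<^sup>2)"
  proof (rule integrable_const_bound[where B="B0^2"])
    show "AE x in M. norm ((cmod (S x))\<^sup>2) \<le> B0\<^sup>2"
      using B0 by (auto intro!: AE_I2 power_mono)
    show "(\<lambda>x. (cmod (S x))\<^sup>2) \<in> borel_measurable M" using mS by measurable
  qed
  have sq: "square_integrable M \<alpha>"
    unfolding square_integrable_def using m\<alpha> isq by (simp add: \<alpha>_def)
  define I where "I k = integral\<^sup>L M (\<lambda>x. \<alpha> x * \<psi> k x)" for k
  define A where "A = integral\<^sup>L M (\<lambda>x. (cmod (S x))\<^sup>2)"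
  have A0: "A \<ge> 0" unfolding A_def by (intro integral_nonneg_AE) auto
  have int_k: "integrable M (\<lambda>x. \<alpha> x * \<psi> k x)" if "k \<in> K" for k
  proof (rule integrable_const_bound[where B="B0 * C k"])
    show "AE x in M. norm (\<alpha> x * \<psi> k x) \<le> B0 * C k"
      using B0 C[OF that] by (auto intro!: AE_I2 mult_mono simp: \<alpha>_def norm_mult intro: order_trans[OF norm_ge_zero])
    show "(\<lambda>x. \<alpha> x * \<psi> k x) \<in> borel_measurable M" using m\<alpha> mpsi[OF that] by measurable
  qed
  have "complex_of_real A = integral\<^sup>L M (\<lambda>x. complex_of_real ((cmod (S x))\<^sup>2))"
    unfolding A_def by (rule integral_complex_of_real[symmetric])
  also have "\<dots> = integral\<^sup>L M (\<lambda>x. \<Sum>k\<in>K. \<beta> k * (\<alpha> x * \<psi> k x))"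
  proof (intro Bochner_Integration.integral_cong refl)
    fix x
    have "complex_of_real ((cmod (S x))\<^sup>2) = S x * \<alpha> x"
      unfolding \<alpha>_def by (rule complex_norm_square)
    also have "\<dots> = (\<Sum>k\<in>K. \<beta> k * (\<alpha> x * \<psi> k x))"
      unfolding S_def[of x] sum_distrib_right by (simp add: mult_ac)
    finally show "complex_of_real ((cmod (S x))\<^sup>2) = (\<Sum>k\<in>K. \<beta> k * (\<alpha> x * \<psi> k x))" .
  qed
  also have "\<dots> = (\<Sum>k\<in>K. \<beta> k * I k)"
    unfolding I_def by (subst Bochner_Integration.integral_sum) (auto intro!: int_k)
  finally have AI: "complex_of_real A = (\<Sum>k\<in>K. \<beta> k * I k)" .
  have "A = cmod (\<Sum>k\<in>K. \<beta> k * I k)" using AI A0 by (metis norm_of_real abs_of_nonneg)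
  also have "\<dots> \<le> (\<Sum>k\<in>K. \<bar>cmod (\<beta> k)\<bar> * \<bar>cmod (I k)\<bar>)"
    using norm_sum[of "\<lambda>k. \<beta> k * I k" K] by (simp add: norm_mult)
  also have "\<dots> \<le> L2_set (\<lambda>k. cmod (\<beta> k)) K * L2_set (\<lambda>k. cmod (I k)) K"
    by (rule L2_set_mult_ineq)
  also have "L2_set (\<lambda>k. cmod (I k)) K \<le> sqrt (\<Delta> * A)"
    unfolding L2_set_def A_def I_def
    using H[OF sq] by (simp add: \<alpha>_def)
  finally have "A \<le> L2_set (\<lambda>k. cmod (\<beta> k)) K * sqrt (\<Delta> * A)"
    by (simp add: mult_left_mono L2_set_nonneg)
  hence "A\<^sup>2 \<le> (L2_set (\<lambda>k. cmod (\<beta> k)) K)\<^sup>2 * (\<Delta> * A)"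
    using A0 D0 by (metis power_mono power_mult_distrib real_sqrt_pow2 mult_nonneg_nonneg)
  also have "(L2_set (\<lambda>k. cmod (\<beta> k)) K)\<^sup>2 = (\<Sum>k\<in>K. (cmod (\<beta> k))\<^sup>2)"
    unfolding L2_set_def by (simp add: sum_nonneg)
  finally have "A * A \<le> (\<Delta> * (\<Sum>k\<in>K. (cmod (\<beta> k))\<^sup>2)) * A"
    by (simp add: power2_eq_square mult_ac)
  hence "A \<le> \<Delta> * (\<Sum>k\<in>K. (cmod (\<beta> k))\<^sup>2)"
    using A0 D0 by (cases "A = 0") (auto intro!: sum_nonneg mult_nonneg_nonneg)
  thus ?thesis unfolding A_def S_def .
qed
lemma l2inner_sum_left:
  assumes "finite B"
  shows "l2inner Y nu (\<lambda>y. \<Sum>\<phi>\<in>B. c \<phi> * \<phi> y) \<psi> = (\<Sum>\<phi>\<in>B. c \<phi> * l2inner Y nu \<phi> \<psi>)"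
  unfolding l2inner_def
  by (simp add: sum_distrib_left sum_distrib_right mult_ac sum.swap[of _ Y])

lemma l2inner_cong_left:
  assumes "\<And>y. y \<in> Y \<Longrightarrow> f y = g y"
  shows "l2inner Y nu f \<psi> = l2inner Y nu g \<psi>"
  unfolding l2inner_def using assms by (intro sum.cong) auto

lemma l2inner_cnj: "l2inner Y nu g f = cnj (l2inner Y nu f g)"
  unfolding l2inner_def by (simp add: mult_ac)

lemma onb_coeff:
  assumes onb: "is_onb Y nu B"
  obtains c where "\<And>y. y \<in> Y \<Longrightarrow> f y = (\<Sum>\<phi>\<in>B. c \<phi> * \<phi> y)"
    and "\<And>\<psi>. \<psi> \<in> B \<Longrightarrow> l2inner Y nu f \<psi> = c \<psi>"
proof -
  from onb obtain c where c: "\<And>y. y \<in> Y \<Longrightarrow> f y = (\<Sum>\<phi>\<in>B. c \<phi> * \<phi> y)"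
    unfolding is_onb_def by blast
  have fB: "finite B" and orth: "\<And>\<phi> \<psi>. \<phi> \<in> B \<Longrightarrow> \<psi> \<in> B \<Longrightarrow> l2inner Y nu \<phi> \<psi> = (if \<phi> = \<psi> then 1 else 0)"
    using onb unfolding is_onb_def by auto
  have "l2inner Y nu f \<psi> = c \<psi>" if "\<psi> \<in> B" for \<psi>
  proof -
    have "l2inner Y nu f \<psi> = l2inner Y nu (\<lambda>y. \<Sum>\<phi>\<in>B. c \<phi> * \<phi> y) \<psi>"
      by (rule l2inner_cong_left) (rule c)
    also have "\<dots> = (\<Sum>\<phi>\<in>B. c \<phi> * l2inner Y nu \<phi> \<psi>)" by (rule l2inner_sum_left[OF fB])
    also have "\<dots> = (\<Sum>\<phi>\<in>B. if \<phi> = \<psi> then c \<phi> else 0)"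
      by (intro sum.cong) (auto simp: orth that)
    also have "\<dots> = c \<psi>" using fB that by simp
    finally show ?thesis .
  qed
  with c show ?thesis using that by blast
qed

lemma onb_expand:
  assumes onb: "is_onb Y nu B" and "y \<in> Y"
  shows "f y = (\<Sum>\<phi>\<in>B. l2inner Y nu f \<phi> * \<phi> y)"
proof -
  obtain c where c: "\<And>y. y \<in> Y \<Longrightarrow> f y = (\<Sum>\<phi>\<in>B. c \<phi> * \<phi> y)"
    and cc: "\<And>\<psi>. \<psi> \<in> B \<Longrightarrow> l2inner Y nu f \<psi> = c \<psi>" using onb_coeff[OF onb] by metis
  show ?thesis using c[OF assms(2)] cc by simp
qed

lemma onb_parseval:
  assumes onb: "is_onb Y nu B"
  shows "l2inner Y nu f f = of_real (\<Sum>\<phi>\<in>B. (cmod (l2inner Y nu f \<phi>))\<^sup>2)"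
proof -
  obtain c where c: "\<And>y. y \<in> Y \<Longrightarrow> f y = (\<Sum>\<phi>\<in>B. c \<phi> * \<phi> y)"
    and cc: "\<And>\<psi>. \<psi> \<in> B \<Longrightarrow> l2inner Y nu f \<psi> = c \<psi>" using onb_coeff[OF onb] by metis
  have fB: "finite B" using onb unfolding is_onb_def by auto
  have "l2inner Y nu f f = l2inner Y nu (\<lambda>y. \<Sum>\<phi>\<in>B. c \<phi> * \<phi> y) f"
    by (rule l2inner_cong_left) (rule c)
  also have "\<dots> = (\<Sum>\<phi>\<in>B. c \<phi> * l2inner Y nu \<phi> f)" by (rule l2inner_sum_left[OF fB])
  also have "\<dots> = (\<Sum>\<phi>\<in>B. c \<phi> * cnj (c \<phi>))"
    by (intro sum.cong refl) (simp add: l2inner_cnj[of Y nu \<phi> f for \<phi>] cc)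
  also have "\<dots> = (\<Sum>\<phi>\<in>B. of_real ((cmod (l2inner Y nu f \<phi>))\<^sup>2))"
    by (intro sum.cong refl) (simp add: cc complex_norm_square[symmetric] del: of_real_power)
  finally show ?thesis by simp
qed

theorem proposition3p1:
  fixes M :: "'x measure"
    and F :: "'x \<Rightarrow> 'y"
    and \<rho> :: "'l \<Rightarrow> 'y \<Rightarrow> 'z"
    and Yl :: "'l \<Rightarrow> 'z set"
    and \<nu> :: "'l \<Rightarrow> 'z \<Rightarrow> real"
    and B :: "'l \<Rightarrow> ('z \<Rightarrow> complex) set"
    and Ls :: "'l set"
    and \<Omega> :: "'l \<Rightarrow> 'z set"
    and \<Delta> :: real
  assumes surj: "\<And>l. \<rho> l ` UNIV = Yl l"
    and fin: "\<And>l. finite (Yl l)"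
    and nu_pos: "\<And>l y. y \<in> Yl l \<Longrightarrow> \<nu> l y > 0"
    and nu_prob: "\<And>l. (\<Sum>y\<in>Yl l. \<nu> l y) = 1"
    and onb: "\<And>l. is_onb (Yl l) (\<nu> l) (B l)"
    and one_in: "\<And>l. (\<lambda>_. 1) \<in> B l"
    and finmeas: "emeasure M (space M) < \<infinity>"
    and meas: "\<And>l y. {x \<in> space M. \<rho> l (F x) = y} \<in> sets M"
    and Ls_fin: "finite Ls"
    and Delta_nonneg: "\<Delta> \<ge> 0"
    and Delta_ineq: "sieve_ineq M F \<rho> B Ls \<Delta>"
    and Delta_least: "\<And>D. D \<ge> 0 \<Longrightarrow> sieve_ineq M F \<rho> B Ls D \<Longrightarrow> \<Delta> \<le> D"
    and Omega_sub: "\<And>l. l \<in> Ls \<Longrightarrow> \<Omega> l \<subseteq> Yl l"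
  shows "integral\<^sup>L M (\<lambda>x. (real (card {l \<in> Ls. \<rho> l (F x) \<in> \<Omega> l})
              - (\<Sum>l\<in>Ls. nu_set (\<nu> l) (\<Omega> l)))\<^sup>2)
         \<le> \<Delta> * (\<Sum>l\<in>Ls. nu_set (\<nu> l) (\<Omega> l) * (1 - nu_set (\<nu> l) (\<Omega> l)))"
proof -
  define Bs where "Bs l = B l - {(\<lambda>_. 1)}" for l
  define K where "K = Sigma Ls Bs"
  have fB: "finite (B l)" for l using onb[of l] unfolding is_onb_def by auto
  have fK: "finite K" unfolding K_def Bs_def using Ls_fin fB by auto
  define ind where "ind l y = (if y \<in> \<Omega> l then 1 else 0 :: complex)" for l y
  define \<psi> :: "'l \<times> ('z \<Rightarrow> complex) \<Rightarrow> 'x \<Rightarrow> complex" where "\<psi> k x = (case k of (l, \<phi>) \<Rightarrow> \<phi> (\<rho> l (F x)))" for k x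
  define \<beta> :: "'l \<times> ('z \<Rightarrow> complex) \<Rightarrow> complex" where "\<beta> k = (case k of (l, \<phi>) \<Rightarrow> l2inner (Yl l) (\<nu> l) (ind l) \<phi>)" for k
  have inY: "\<rho> l y \<in> Yl l" for l y using surj[of l] by auto
  have fm: "finite_measure M" using finmeas by (intro finite_measureI) auto
  have mR: "(\<lambda>x. \<rho> l (F x)) \<in> measurable M (count_space (Yl l))" for l
  proof -
    have "(\<lambda>x. \<rho> l (F x)) -` {a} \<inter> space M = {x \<in> space M. \<rho> l (F x) = a}" for a by auto
    then show ?thesis using fin[of l] meas inY by (subst measurable_count_space_eq2) auto
  qed
  have mpsi: "\<psi> k \<in> borel_measurable M" if "k \<in> K" for k
  proof -
    obtain l \<phi> where k: "k = (l, \<phi>)" by fastforce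
    have "(\<lambda>x. \<phi> (\<rho> l (F x))) \<in> borel_measurable M"
      by (rule measurable_compose[OF mR]) simp
    thus ?thesis unfolding \<psi>_def k by simp
  qed
  have bpsi: "\<exists>C. \<forall>x\<in>space M. cmod (\<psi> k x) \<le> C" if "k \<in> K" for k
  proof -
    obtain l \<phi> where k: "k = (l, \<phi>)" by fastforce
    have "cmod (\<phi> (\<rho> l (F x))) \<le> (\<Sum>y\<in>Yl l. cmod (\<phi> y))" for x
      by (rule member_le_sum[OF inY _ fin]) auto
    thus ?thesis unfolding \<psi>_def k by auto
  qed
  have H: "(\<Sum>k\<in>K. (cmod (integral\<^sup>L M (\<lambda>x. \<alpha> x * \<psi> k x)))\<^sup>2) \<le> \<Delta> * integral\<^sup>L M (\<lambda>x. (cmod (\<alpha> x))\<^sup>2)"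
    if "square_integrable M \<alpha>" for \<alpha>
  proof -
    have "(\<Sum>k\<in>K. (cmod (integral\<^sup>L M (\<lambda>x. \<alpha> x * \<psi> k x)))\<^sup>2) =
      (\<Sum>l\<in>Ls. \<Sum>\<phi>\<in>B l - {(\<lambda>_. 1)}. (cmod (integral\<^sup>L M (\<lambda>x. \<alpha> x * \<phi> (\<rho> l (F x)))))\<^sup>2)"
      unfolding K_def Bs_def \<psi>_def using Ls_fin fB by (subst sum.Sigma) (simp_all add: case_prod_beta)
    thus ?thesis using Delta_ineq that unfolding sieve_ineq_def by simp
  qed
  note D = dual[OF fm fK mpsi bpsi H Delta_nonneg, of \<beta>]
  have one_inner: "l2inner (Yl l) (\<nu> l) (ind l) (\<lambda>_. 1) = of_real (nu_set (\<nu> l) (\<Omega> l))"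
    and self_inner: "l2inner (Yl l) (\<nu> l) (ind l) (ind l) = of_real (nu_set (\<nu> l) (\<Omega> l))"
    if "l \<in> Ls" for l
  proof -
    have e: "{y \<in> Yl l. y \<in> \<Omega> l} = \<Omega> l" using Omega_sub[OF that] by auto
    have "l2inner (Yl l) (\<nu> l) (ind l) (\<lambda>_. 1) = (\<Sum>y\<in>Yl l. if y \<in> \<Omega> l then complex_of_real (\<nu> l y) else 0)"
      unfolding l2inner_def ind_def by (intro sum.cong) auto
    also have "\<dots> = (\<Sum>y\<in>\<Omega> l. complex_of_real (\<nu> l y))"
      by (subst sum.inter_filter[OF fin, symmetric]) (simp add: e)
    finally show "l2inner (Yl l) (\<nu> l) (ind l) (\<lambda>_. 1) = of_real (nu_set (\<nu> l) (\<Omega> l))"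
      unfolding nu_set_def by simp
    have "l2inner (Yl l) (\<nu> l) (ind l) (ind l) = (\<Sum>y\<in>Yl l. if y \<in> \<Omega> l then complex_of_real (\<nu> l y) else 0)"
      unfolding l2inner_def ind_def by (intro sum.cong) auto
    also have "\<dots> = (\<Sum>y\<in>\<Omega> l. complex_of_real (\<nu> l y))"
      by (subst sum.inter_filter[OF fin, symmetric]) (simp add: e)
    finally show "l2inner (Yl l) (\<nu> l) (ind l) (ind l) = of_real (nu_set (\<nu> l) (\<Omega> l))"
      unfolding nu_set_def by simp
  qed
  have expand: "ind l y - of_real (nu_set (\<nu> l) (\<Omega> l)) = (\<Sum>\<phi>\<in>Bs l. \<beta> (l, \<phi>) * \<phi> y)"
    if "l \<in> Ls" "y \<in> Yl l" for l y
  proof -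
    define g where "g \<phi> = l2inner (Yl l) (\<nu> l) (ind l) \<phi>" for \<phi>
    have "ind l y = (\<Sum>\<phi>\<in>B l. g \<phi> * \<phi> y)"
      unfolding g_def by (rule onb_expand[OF onb that(2)])
    also have "\<dots> = g (\<lambda>_. 1) * (\<lambda>_. 1) y + (\<Sum>\<phi>\<in>B l - {\<lambda>_. 1}. g \<phi> * \<phi> y)"
      by (rule sum.remove[OF fB one_in])
    also have "(\<Sum>\<phi>\<in>B l - {\<lambda>_. 1}. g \<phi> * \<phi> y) = (\<Sum>\<phi>\<in>Bs l. \<beta> (l, \<phi>) * \<phi> y)"
      unfolding Bs_def \<beta>_def g_def by simp
    also have "g (\<lambda>_. 1) = of_real (nu_set (\<nu> l) (\<Omega> l))" unfolding g_def by (rule one_inner[OF that(1)])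
    finally show ?thesis by simp
  qed
  have pars: "(\<Sum>\<phi>\<in>Bs l. (cmod (\<beta> (l, \<phi>)))\<^sup>2) = nu_set (\<nu> l) (\<Omega> l) * (1 - nu_set (\<nu> l) (\<Omega> l))"
    if "l \<in> Ls" for l
  proof -
    define g where "g \<phi> = l2inner (Yl l) (\<nu> l) (ind l) \<phi>" for \<phi>
    define N where "N = nu_set (\<nu> l) (\<Omega> l)"
    have "complex_of_real N = complex_of_real (\<Sum>\<phi>\<in>B l. (cmod (g \<phi>))\<^sup>2)"
      unfolding N_def g_def using onb_parseval[OF onb, of l "ind l"] self_inner[OF that] by metis
    hence "N = (\<Sum>\<phi>\<in>B l. (cmod (g \<phi>))\<^sup>2)"
      using of_real_eq_iff by blast
    also have "\<dots> = (cmod (g (\<lambda>_. 1)))\<^sup>2 + (\<Sum>\<phi>\<in>B l - {\<lambda>_. 1}. (cmod (g \<phi>))\<^sup>2)"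
      by (rule sum.remove[OF fB one_in])
    also have "(\<Sum>\<phi>\<in>B l - {\<lambda>_. 1}. (cmod (g \<phi>))\<^sup>2) = (\<Sum>\<phi>\<in>Bs l. (cmod (\<beta> (l, \<phi>)))\<^sup>2)"
      unfolding Bs_def \<beta>_def g_def by simp
    also have "(cmod (g (\<lambda>_. 1)))\<^sup>2 = N\<^sup>2"
      unfolding g_def N_def one_inner[OF that] norm_of_real by simp
    finally have "N = N\<^sup>2 + (\<Sum>\<phi>\<in>Bs l. (cmod (\<beta> (l, \<phi>)))\<^sup>2)" .
    thus ?thesis unfolding N_def[symmetric] by (simp add: algebra_simps power2_eq_square)
  qed
  have pt: "complex_of_real (real (card {l \<in> Ls. \<rho> l (F x) \<in> \<Omega> l}) - (\<Sum>l\<in>Ls. nu_set (\<nu> l) (\<Omega> l)))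
      = (\<Sum>k\<in>K. \<beta> k * \<psi> k x)" for x
  proof -
    have c: "complex_of_real (real (card {l \<in> Ls. \<rho> l (F x) \<in> \<Omega> l})) = (\<Sum>l\<in>Ls. ind l (\<rho> l (F x)))"
      unfolding ind_def using sum.inter_filter[OF Ls_fin, of "\<lambda>_. (1::complex)" "\<lambda>l. \<rho> l (F x) \<in> \<Omega> l"]
      by simp
    have "complex_of_real (real (card {l \<in> Ls. \<rho> l (F x) \<in> \<Omega> l}) - (\<Sum>l\<in>Ls. nu_set (\<nu> l) (\<Omega> l)))
       = (\<Sum>l\<in>Ls. ind l (\<rho> l (F x)) - of_real (nu_set (\<nu> l) (\<Omega> l)))"
      using c by (simp add: sum_subtractf)
    also have "\<dots> = (\<Sum>l\<in>Ls. \<Sum>\<phi>\<in>Bs l. \<beta> (l, \<phi>) * \<psi> (l, \<phi>) x)"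
      by (intro sum.cong refl) (simp add: expand inY \<psi>_def)
    also have "\<dots> = (\<Sum>k\<in>K. \<beta> k * \<psi> k x)"
      unfolding K_def using Ls_fin fB by (subst sum.Sigma) (auto simp: Bs_def)
    finally show ?thesis .
  qed
  have "integral\<^sup>L M (\<lambda>x. (real (card {l \<in> Ls. \<rho> l (F x) \<in> \<Omega> l})
              - (\<Sum>l\<in>Ls. nu_set (\<nu> l) (\<Omega> l)))\<^sup>2)
      = integral\<^sup>L M (\<lambda>x. (cmod (\<Sum>k\<in>K. \<beta> k * \<psi> k x))\<^sup>2)"
    by (intro Bochner_Integration.integral_cong refl) (simp only: pt[symmetric] norm_of_real power2_abs)
  also have "\<dots> \<le> \<Delta> * (\<Sum>k\<in>K. (cmod (\<beta> k))\<^sup>2)" by (rule D)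
  also have "(\<Sum>k\<in>K. (cmod (\<beta> k))\<^sup>2) = (\<Sum>l\<in>Ls. \<Sum>\<phi>\<in>Bs l. (cmod (\<beta> (l, \<phi>)))\<^sup>2)"
    unfolding K_def using Ls_fin fB by (subst sum.Sigma) (auto simp: Bs_def)
  also have "\<dots> = (\<Sum>l\<in>Ls. nu_set (\<nu> l) (\<Omega> l) * (1 - nu_set (\<nu> l) (\<Omega> l)))"
    by (intro sum.cong refl) (rule pars)
  finally show ?thesis .
qed

end
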